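(* In the compulsory constrained two-facility location setting described in the context, for every location profile $\mathbf{x}\in\mathbb{R}^n$ there exists an optimal solution for the sum cost objective (minimizing $\sum_{j=1}^n \max\{|y_1-x_j|,|y_2-x_j|\}$ over feasible $(y_1,y_2)$) that belongs to $AP$, i.e. whose two facility locations are $\{a_k,a_{k+1}\}$ for some $k$.
   Context: $n$ agents have locations $x_1,\dots,x_n\in\mathbb{R}$. $A=\{a_1\le a_2\le\dots\le a_m\}$ is a multiset of alternative locations, $m\ge2$; a feasible outcome places $F_1$ at $y_1\in A$ and $F_2$ at $y_2\in A\setminus\{y_1\}$ (removing one copy from the multiset). Each agent is served by both facilities, with cost $\max\{|y_1-x_j|,|y_2-x_j|\}$. $AP=\{(a_1,a_2),(a_2,a_3),\dots,(a_{m-1},a_m)\}$ (a pair is identified with placing the two facilities at its two entries, in either order). *)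

theory Defs
  imports Main "HOL.Real"
begin

definition agent_cost :: "real \<Rightarrow> real \<Rightarrow> real \<Rightarrow> real" where
  "agent_cost y1 y2 x = max \<bar>y1 - x\<bar> \<bar>y2 - x\<bar>"

definition sum_cost :: "real list \<Rightarrow> real \<Rightarrow> real \<Rightarrow> real" where
  "sum_cost xs y1 y2 = (\<Sum>j<length xs. agent_cost y1 y2 (xs ! j))"

text \<open>The multiset A of alternatives is a sorted list a; a feasible outcome picks two
  distinct positions i, j (so two copies of the same value may both be used).\<close>
definition feasible :: "real list \<Rightarrow> real \<Rightarrow> real \<Rightarrow> bool" where
  "feasible a y1 y2 = (\<exists>i j. i < length a \<and> j < length a \<and> i \<noteq> j \<and> y1 = a ! i \<and> y2 = a ! j)"

definition optimal_sum :: "real list \<Rightarrow> real list \<Rightarrow> real \<Rightarrow> real \<Rightarrow> bool" where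
  "optimal_sum a xs y1 y2 = (feasible a y1 y2 \<and>
     (\<forall>z1 z2. feasible a z1 z2 \<longrightarrow> sum_cost xs y1 y2 \<le> sum_cost xs z1 z2))"

definition in_AP :: "real list \<Rightarrow> real \<Rightarrow> real \<Rightarrow> bool" where
  "in_AP a y1 y2 = (\<exists>k. Suc k < length a \<and>
     ((y1 = a ! k \<and> y2 = a ! Suc k) \<or> (y1 = a ! Suc k \<and> y2 = a ! k)))"

end

theory Submission
  imports Defs
begin

lemma ac_sym: "agent_cost y1 y2 x = agent_cost y2 y1 x"
  unfolding agent_cost_def by simp

lemma ac_mid: "u \<le> v \<Longrightarrow> v \<le> w \<Longrightarrow> agent_cost u v x \<le> agent_cost u w (x::real)"
  unfolding agent_cost_def by (auto simp: abs_if max_def)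

lemma sc_sym: "sum_cost xs y1 y2 = sum_cost xs y2 y1"
  unfolding sum_cost_def using ac_sym by simp

lemma adj_better:
  assumes "sorted a" "i < j" "j < length a"
  shows "sum_cost xs (a!i) (a!Suc i) \<le> sum_cost xs (a!i) (a!j)"
proof -
  have "a!i \<le> a!Suc i" "a!Suc i \<le> a!j"
    using assms by (auto intro: sorted_nth_mono)
  then show ?thesis unfolding sum_cost_def
    by (intro sum_mono ac_mid) auto
qed

theorem lemma2:
  fixes a xs :: "real list"
  assumes "sorted a" and "length a \<ge> 2"
  shows "\<exists>y1 y2. optimal_sum a xs y1 y2 \<and> in_AP a y1 y2"
proof -
  define n where "n = length a"
  define S where "S = {p::nat\<times>nat. fst p < n \<and> snd p < n \<and> fst p \<noteq> snd p}"
  define f where "f p = sum_cost xs (a ! fst p) (a ! snd p)" for p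
  have finS: "finite S"
    by (rule finite_subset[of _ "{..<n} \<times> {..<n}"]) (auto simp: S_def)
  have "(0, 1) \<in> S" using assms(2) by (auto simp: S_def n_def)
  hence neS: "S \<noteq> {}" by blast
  have "Min (f ` S) \<in> f ` S" using finS neS by simp
  then obtain p where pS: "p \<in> S" and pmin: "f p = Min (f ` S)" by auto
  have minle: "f p \<le> f q" if "q \<in> S" for q
    using pmin finS that by simp
  obtain i j where ij: "p = (i, j)" by (cases p)
  define k where "k = min i j"
  define l where "l = max i j"
  have kl: "k < l" "l < n" using pS ij by (auto simp: S_def k_def l_def)
  have fp: "f p = sum_cost xs (a!k) (a!l)"
    using ij by (cases "i \<le> j") (auto simp: f_def k_def l_def sc_sym)
  have adj: "sum_cost xs (a!k) (a!Suc k) \<le> f p"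
    using adj_better[OF assms(1) kl(1)] kl fp by (simp add: n_def)
  have "optimal_sum a xs (a!k) (a!Suc k)"
    unfolding optimal_sum_def
  proof (intro conjI allI impI)
    show "feasible a (a!k) (a!Suc k)"
      unfolding feasible_def using kl by (intro exI[of _ k] exI[of _ "Suc k"]) (auto simp: n_def)
  next
    fix z1 z2 assume "feasible a z1 z2"
    then obtain i' j' where "i' < length a" "j' < length a" "i' \<noteq> j'" "z1 = a!i'" "z2 = a!j'"
      unfolding feasible_def by blast
    hence "(i', j') \<in> S" "f (i', j') = sum_cost xs z1 z2" by (auto simp: S_def n_def f_def)
    thus "sum_cost xs (a!k) (a!Suc k) \<le> sum_cost xs z1 z2"
      using minle adj by fastforce
  qed
  moreover have "in_AP a (a!k) (a!Suc k)"
    unfolding in_AP_def using kl by (intro exI[of _ k]) (auto simp: n_def)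
  ultimately show ?thesis by blast
qed

end
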